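(* Let $D$ be a non-commutative division ring with center $F$. If $M$ is a non-abelian locally solvable maximal subgroup of $D^*$, then $M$ contains a unique maximal abelian normal subgroup.
   Context: $D^*$ is the multiplicative group of $D$; maximal subgroup = proper subgroup maximal among proper subgroups. Locally solvable: every finitely generated subgroup solvable. A maximal abelian normal subgroup of $M$ is an abelian normal subgroup of $M$ not properly contained in another abelian normal subgroup of $M$. *)

theory Defs
  imports "HOL-Algebra.Solvable_Groups"
begin

definition mult_units :: "('a::division_ring) monoid" where
  "mult_units = \<lparr>carrier = {x. x \<noteq> 0}, mult = (\<lambda>x y. x * y), one = 1\<rparr>"

definition maximal_subgroup :: "('a, 'b) monoid_scheme \<Rightarrow> 'a set \<Rightarrow> bool" where
  "maximal_subgroup G M \<longleftrightarrow> subgroup M G \<and> M \<noteq> carrier G \<and>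
     (\<forall>H. subgroup H G \<and> M \<subseteq> H \<longrightarrow> H = M \<or> H = carrier G)"

definition abelian_set :: "('a, 'b) monoid_scheme \<Rightarrow> 'a set \<Rightarrow> bool" where
  "abelian_set G N \<longleftrightarrow> (\<forall>x\<in>N. \<forall>y\<in>N. x \<otimes>\<^bsub>G\<^esub> y = y \<otimes>\<^bsub>G\<^esub> x)"

definition locally_solvable :: "('a, 'b) monoid_scheme \<Rightarrow> 'a set \<Rightarrow> bool" where
  "locally_solvable G M \<longleftrightarrow>
     (\<forall>S. finite S \<and> S \<subseteq> M \<longrightarrow> solvable (subgroup_generated G S))"

definition maximal_abelian_normal :: "('a, 'b) monoid_scheme \<Rightarrow> 'a set \<Rightarrow> 'a set \<Rightarrow> bool" where
  "maximal_abelian_normal G M N \<longleftrightarrow>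
     N \<lhd> G\<lparr>carrier := M\<rparr> \<and> abelian_set G N \<and>
     (\<forall>N'. N' \<lhd> G\<lparr>carrier := M\<rparr> \<and> abelian_set G N' \<and> N \<subseteq> N' \<longrightarrow> N' = N)"

end

theory Submission imports Defs begin

lemma mu_group: "group (mult_units :: ('a::division_ring) monoid)"
proof (rule groupI)
  fix x :: 'a assume "x \<in> carrier mult_units"
  then have x0: "x \<noteq> 0" by (simp add: mult_units_def)
  show "\<exists>y\<in>carrier mult_units. y \<otimes>\<^bsub>mult_units\<^esub> x = \<one>\<^bsub>mult_units\<^esub>"
  proof (rule bexI[of _ "inverse x"])
    show "inverse x \<otimes>\<^bsub>mult_units\<^esub> x = \<one>\<^bsub>mult_units\<^esub>" using x0 by (simp add: mult_units_def)
    show "inverse x \<in> carrier mult_units" using x0 by (simp add: mult_units_def)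
  qed
qed (auto simp: mult_units_def mult.assoc)

lemma mu_inv: "x \<noteq> 0 \<Longrightarrow> inv\<^bsub>(mult_units :: ('a::division_ring) monoid)\<^esub> x = inverse x"
  by (rule group.inv_equality[OF mu_group]) (auto simp: mult_units_def)

lemma subgroup_mu_iff:
  "subgroup H (mult_units :: ('a::division_ring) monoid) \<longleftrightarrow>
   (0 \<notin> H \<and> 1 \<in> H \<and> (\<forall>x\<in>H. \<forall>y\<in>H. x*y \<in> H) \<and> (\<forall>x\<in>H. inverse x \<in> H))"
proof
  assume s: "subgroup H (mult_units :: 'a monoid)"
  have sub: "H \<subseteq> {x. x \<noteq> 0}" using subgroup.subset[OF s] by (simp add: mult_units_def)
  have one: "1 \<in> H" using subgroup.one_closed[OF s] by (simp add: mult_units_def)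
  have mul: "\<forall>x\<in>H. \<forall>y\<in>H. x*y \<in> H" using subgroup.m_closed[OF s] by (simp add: mult_units_def)
  have inv: "\<forall>x\<in>H. inverse x \<in> H"
  proof
    fix x assume xH: "x \<in> H"
    then have "x \<noteq> 0" using sub by auto
    then show "inverse x \<in> H" using subgroup.m_inv_closed[OF s xH] mu_inv by metis
  qed
  show "0 \<notin> H \<and> 1 \<in> H \<and> (\<forall>x\<in>H. \<forall>y\<in>H. x*y \<in> H) \<and> (\<forall>x\<in>H. inverse x \<in> H)"
    using sub one mul inv by auto
next
  assume h: "0 \<notin> H \<and> 1 \<in> H \<and> (\<forall>x\<in>H. \<forall>y\<in>H. x*y \<in> H) \<and> (\<forall>x\<in>H. inverse x \<in> H)"
  show "subgroup H (mult_units :: 'a monoid)"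
  proof (rule subgroup.intro)
    show "H \<subseteq> carrier (mult_units :: 'a monoid)" using h by (auto simp: mult_units_def)
    show "\<And>x y. x\<in>H \<Longrightarrow> y\<in>H \<Longrightarrow> x \<otimes>\<^bsub>(mult_units :: 'a monoid)\<^esub> y \<in> H"
      using h by (simp add: mult_units_def)
    show "\<one>\<^bsub>(mult_units :: 'a monoid)\<^esub> \<in> H" using h by (simp add: mult_units_def)
    fix x assume xH: "x \<in> H"
    then have "x \<noteq> 0" using h by auto
    then have "inv\<^bsub>(mult_units :: 'a monoid)\<^esub> x = inverse x" by (rule mu_inv)
    then show "inv\<^bsub>(mult_units :: 'a monoid)\<^esub> x \<in> H" using h xH by simp
  qed
qed

lemma normal_mu_iff:
  assumes "subgroup M (mult_units :: ('a::division_ring) monoid)"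
  shows "N \<lhd> (mult_units :: 'a monoid)\<lparr>carrier := M\<rparr> \<longleftrightarrow>
   (N \<subseteq> M \<and> 1 \<in> N \<and> (\<forall>x\<in>N. \<forall>y\<in>N. x*y \<in> N) \<and> (\<forall>x\<in>N. inverse x \<in> N)
     \<and> (\<forall>m\<in>M. \<forall>x\<in>N. m*x*inverse m \<in> N))"
proof -
  let ?G = "(mult_units :: 'a monoid)"
  have g: "group (?G\<lparr>carrier := M\<rparr>)" by (rule subgroup.subgroup_is_group[OF assms mu_group])
  have M0: "0 \<notin> M" using assms subgroup_mu_iff by blast
  have invM: "m \<in> M \<Longrightarrow> inv\<^bsub>?G\<lparr>carrier := M\<rparr>\<^esub> m = inverse m" for m
    using group.m_inv_consistent[OF mu_group assms] mu_inv M0 by metis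
  have sub: "subgroup N (?G\<lparr>carrier := M\<rparr>) \<longleftrightarrow>
     (N \<subseteq> M \<and> 1 \<in> N \<and> (\<forall>x\<in>N. \<forall>y\<in>N. x*y \<in> N) \<and> (\<forall>x\<in>N. inverse x \<in> N))"
  proof
    assume s: "subgroup N (?G\<lparr>carrier := M\<rparr>)"
    show "N \<subseteq> M \<and> 1 \<in> N \<and> (\<forall>x\<in>N. \<forall>y\<in>N. x*y \<in> N) \<and> (\<forall>x\<in>N. inverse x \<in> N)"
      using subgroup.subset[OF s] subgroup.one_closed[OF s] subgroup.m_closed[OF s]
        subgroup.m_inv_closed[OF s] invM
      by (fastforce simp: mult_units_def)
  next
    assume h: "N \<subseteq> M \<and> 1 \<in> N \<and> (\<forall>x\<in>N. \<forall>y\<in>N. x*y \<in> N) \<and> (\<forall>x\<in>N. inverse x \<in> N)"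
    show "subgroup N (?G\<lparr>carrier := M\<rparr>)"
      apply (rule subgroup.intro)
      using h invM by (auto simp: mult_units_def)
  qed
  show ?thesis
    unfolding group.normal_inv_iff[OF g] sub
    using invM by (auto simp: mult_units_def)
qed


lemma comm_inv:
  fixes a c :: "'a::division_ring"
  assumes "a*c = c*a" shows "a * inverse c = inverse c * a"
proof (cases "c = 0")
  case True then show ?thesis by simp
next
  case False
  have "inverse c * a = inverse c * (a * c) * inverse c" using False by (simp add: mult.assoc)
  also have "\<dots> = inverse c * (c * a) * inverse c" using assms by simp
  also have "\<dots> = a * inverse c" using False by (simp add: mult.assoc[symmetric])
  finally show ?thesis by simp
qed

lemma herstein:
  fixes A :: "'a::division_ring set"
  assumes A0: "0 \<notin> A" and ab: "\<forall>x\<in>A. \<forall>y\<in>A. x*y=y*x"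
    and nor: "\<forall>d. d\<noteq>0 \<longrightarrow> (\<forall>a\<in>A. d*a*inverse d \<in> A)" and aA: "a\<in>A"
  shows "a*x = x*a"
proof (rule ccontr)
  assume ne: "a*x \<noteq> x*a"
  have x0: "x \<noteq> 0" using ne by auto
  have x1: "1+x \<noteq> 0"
  proof
    assume "1+x = 0" then have "x = -1" by (simp add: add_eq_0_iff)
    then show False using ne by simp
  qed
  define b where "b = x*a*inverse x"
  define b' where "b' = (1+x)*a*inverse (1+x)"
  have bA: "b \<in> A" using nor x0 aA b_def by blast
  have b'A: "b' \<in> A" using nor x1 aA b'_def by blast
  have hb: "b*x = x*a" using x0 by (simp add: b_def mult.assoc)
  have hb': "b'*(1+x) = (1+x)*a" using x1 by (simp add: b'_def mult.assoc)
  have eq: "b' - a = (b - b')*x"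
  proof -
    have "b' + b'*x = a + b*x" using hb hb' by (simp add: algebra_simps)
    then show ?thesis by (simp add: algebra_simps)
  qed
  have cab: "a*b = b*a" and cab': "a*b' = b'*a" using ab aA bA b'A by auto
  show False
  proof (cases "b = b'")
    case True
    then have "b = a" using eq by simp
    then show False using hb ne by simp
  next
    case False
    then have bb: "b - b' \<noteq> 0" by simp
    have xe: "x = inverse (b-b')*(b'-a)" using eq bb by (simp add: mult.assoc[symmetric])
    have c1: "a*(b-b') = (b-b')*a" using cab cab' by (simp add: algebra_simps)
    have c2: "a*(b'-a) = (b'-a)*a" using cab' by (simp add: algebra_simps)
    have "a*x = x*a" unfolding xe
      using comm_inv[OF c1] c2 by (metis mult.assoc)
    then show False using ne by simp
  qed
qed

definition abn :: "'a::division_ring set \<Rightarrow> 'a set \<Rightarrow> bool" where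
  "abn M N \<longleftrightarrow> N \<subseteq> M \<and> 1 \<in> N \<and> (\<forall>x\<in>N. \<forall>y\<in>N. x*y \<in> N) \<and> (\<forall>x\<in>N. inverse x \<in> N)
     \<and> (\<forall>m\<in>M. \<forall>x\<in>N. m*x*inverse m \<in> N) \<and> (\<forall>x\<in>N. \<forall>y\<in>N. x*y = y*x)"

lemma comm_AB:
  fixes M A B :: "'a::division_ring set"
  assumes M0: "0 \<notin> M" and A: "abn M A" and B: "abn M B"
    and plus1: "\<forall>x\<in>A. x+1 \<noteq> 0 \<longrightarrow> x+1 \<in> A" and xA: "x\<in>A" and yB: "y\<in>B"
  shows "x*y = y*x"
proof -
  have AM: "A \<subseteq> M" and BM: "B \<subseteq> M" using A B by (auto simp: abn_def)
  have x0: "x \<noteq> 0" and y0: "y \<noteq> 0" using AM BM M0 xA yB by auto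
  have key: "\<And>z. z \<in> A \<Longrightarrow> z \<noteq> 0 \<Longrightarrow> \<exists>c. c \<in> A \<and> c \<in> B \<and> c*y*z = z*y \<and> c \<noteq> 0"
  proof -
    fix z assume zA: "z \<in> A" and z0: "z \<noteq> 0"
    define c where "c = z*y*inverse z*inverse y"
    have "y*inverse z*inverse y \<in> A" using A yB BM zA by (auto simp: abn_def)
    then have cA: "c \<in> A" using A zA unfolding c_def abn_def by (metis mult.assoc)
    have "z*y*inverse z \<in> B" using B zA AM yB by (auto simp: abn_def)
    then have cB: "c \<in> B" using B yB unfolding c_def abn_def by blast
    have "c*y*z = z*y" using y0 z0 by (simp add: c_def mult.assoc)
    moreover have "c \<noteq> 0" using y0 z0 by (simp add: c_def)
    ultimately show "\<exists>c. c \<in> A \<and> c \<in> B \<and> c*y*z = z*y \<and> c \<noteq> 0" using cA cB by blast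
  qed
  show ?thesis
  proof (cases "x+1 = 0")
    case True
    then have "x = -1" by (simp add: eq_neg_iff_add_eq_0)
    then show ?thesis by simp
  next
    case False
    obtain c where cA: "c\<in>A" and cB: "c\<in>B" and hc: "c*y*x = x*y" and c0: "c\<noteq>0"
      using key xA x0 by blast
    obtain c' where cA': "c'\<in>A" and cB': "c'\<in>B" and hc': "c'*y*(x+1) = (x+1)*y"
      using key plus1 xA False by blast
    have cy: "c*y = y*c" and cy': "c'*y = y*c'" using B cB cB' yB by (auto simp: abn_def)
    have yx: "y*x = inverse c*x*y"
    proof -
      have "inverse c * (c*y*x) = y*x" using c0 by (simp add: mult.assoc[symmetric])
      then show ?thesis using hc by (simp add: mult.assoc)
    qed
    have "c'*(y*x) + c'*y = x*y + y" using hc' by (simp add: algebra_simps)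
    then have "c'*inverse c*x*y + c'*y = x*y + y" using yx by (simp add: mult.assoc)
    then have "(1 - c'*inverse c)*x*y = (c'-1)*y" by (simp add: algebra_simps)
    then have "(1 - c'*inverse c)*x*y*inverse y = (c'-1)*y*inverse y" by simp
    then have ux: "(1 - c'*inverse c)*x = c'-1" using y0 by (simp add: mult.assoc)
    show ?thesis
    proof (cases "1 - c'*inverse c = 0")
      case True
      then have "c' = 1" using ux by simp
      then have "inverse c = 1" using True by simp
      then have "c = 1" by (metis inverse_1 inverse_inverse_eq)
      then show ?thesis using hc by simp
    next
      case False
      have xe: "x = inverse (1 - c'*inverse c) * (c'-1)" using ux False
        by (metis mult.assoc left_inverse mult_1)
      have ic: "y * inverse c = inverse c * y" using comm_inv cy by metis
      have "y*(1 - c'*inverse c) = y - (y*c')*inverse c" by (simp add: right_diff_distrib mult.assoc)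
      also have "\<dots> = y - (c'*y)*inverse c" using cy' by simp
      also have "\<dots> = y - c'*(y*inverse c)" by (simp add: mult.assoc)
      also have "\<dots> = y - c'*inverse c*y" using ic by (simp add: mult.assoc)
      also have "\<dots> = (1 - c'*inverse c)*y" by (simp add: left_diff_distrib)
      finally have u: "y*(1 - c'*inverse c) = (1 - c'*inverse c)*y" .
      have v: "y*(c'-1) = (c'-1)*y" using cy' by (simp add: algebra_simps)
      have "y*x = x*y" unfolding xe using comm_inv[OF u] v by (metis mult.assoc)
      then show ?thesis by simp
    qed
  qed
qed


lemma dichotomy:
  fixes M A :: "'a::division_ring set"
  assumes M0: "0 \<notin> M" and M1: "1 \<in> M" and Mm: "\<forall>x\<in>M. \<forall>y\<in>M. x*y \<in> M"
    and Mi: "\<forall>x\<in>M. inverse x \<in> M"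
    and maxH: "\<And>H. 0 \<notin> H \<Longrightarrow> 1 \<in> H \<Longrightarrow> (\<forall>x\<in>H. \<forall>y\<in>H. x*y \<in> H) \<Longrightarrow> (\<forall>x\<in>H. inverse x \<in> H)
        \<Longrightarrow> M \<subseteq> H \<Longrightarrow> H = M \<or> H = {x. x \<noteq> 0}"
    and A: "abn M A" and Amax: "\<forall>N'. abn M N' \<and> A \<subseteq> N' \<longrightarrow> N' = A"
  shows "(\<forall>a\<in>A. \<forall>x. a*x = x*a) \<or> (\<forall>x\<in>A. x+1 \<noteq> 0 \<longrightarrow> x+1 \<in> A)"
proof -
  have AM: "A \<subseteq> M" and Aab: "\<forall>x\<in>A. \<forall>y\<in>A. x*y = y*x"
    and Aconj: "\<forall>m\<in>M. \<forall>x\<in>A. m*x*inverse m \<in> A" using A by (auto simp: abn_def)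
  define C where "C = {w. \<forall>a\<in>A. w*a = a*w}"
  define K where "K = {z. \<forall>w\<in>C. z*w = w*z}"
  have AC: "A \<subseteq> C" using Aab by (auto simp: C_def)
  have AK: "A \<subseteq> K" by (auto simp: K_def C_def)
  have KC: "K \<subseteq> C" using AC by (auto simp: K_def C_def)
  have Kab: "\<And>z z'. z \<in> K \<Longrightarrow> z' \<in> K \<Longrightarrow> z*z' = z'*z" using KC by (auto simp: K_def)
  have K1: "1 \<in> K" by (simp add: K_def)
  have Kadd: "\<And>z z'. z \<in> K \<Longrightarrow> z' \<in> K \<Longrightarrow> z+z' \<in> K"
    by (auto simp: K_def algebra_simps)
  have Kmul: "\<And>z z'. z \<in> K \<Longrightarrow> z' \<in> K \<Longrightarrow> z*z' \<in> K"
    unfolding K_def by (auto simp: mult.assoc) (metis mult.assoc)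
  have Kinv: "\<And>z. z \<in> K \<Longrightarrow> inverse z \<in> K"
  proof -
    fix z assume zK: "z \<in> K"
    show "inverse z \<in> K" unfolding K_def
    proof (intro CollectI ballI)
      fix w assume wC: "w \<in> C"
      have "w*z = z*w" using zK wC unfolding K_def by auto
      from comm_inv[OF this] show "inverse z * w = w * inverse z" by simp
    qed
  qed
  have Kconj: "\<And>m z. m \<in> M \<Longrightarrow> z \<in> K \<Longrightarrow> m*z*inverse m \<in> K"
  proof -
    fix m z assume mM: "m \<in> M" and zK: "z \<in> K"
    have m0: "m \<noteq> 0" using mM M0 by auto
    have imM: "inverse m \<in> M" using Mi mM by auto
    show "m*z*inverse m \<in> K" unfolding K_def
    proof (intro CollectI ballI)
      fix w assume wC: "w \<in> C"
      define w' where "w' = inverse m * w * m"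
      have w'C: "w' \<in> C" unfolding C_def
      proof (intro CollectI ballI)
        fix a assume aA: "a \<in> A"
        have a'A: "m*a*inverse m \<in> A" using Aconj mM aA by auto
        have "w' * a = inverse m * w * (m*a*inverse m) * m" using m0
          by (simp add: w'_def mult.assoc)
        also have "\<dots> = inverse m * (m*a*inverse m) * w * m" using wC a'A
          by (simp add: C_def mult.assoc)
        also have "\<dots> = a * w'" using m0 by (simp add: w'_def mult.assoc[symmetric])
        finally show "w' * a = a * w'" .
      qed
      have zw: "z*w' = w'*z" using zK w'C by (auto simp: K_def)
      have "m*z*inverse m*w = m*(z*w')*inverse m" using m0 by (simp add: w'_def mult.assoc)
      also have "\<dots> = m*(w'*z)*inverse m" using zw by simp
      also have "\<dots> = w*(m*z*inverse m)" using m0 by (simp add: w'_def mult.assoc[symmetric])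
      finally show "m*z*inverse m*w = w*(m*z*inverse m)" .
    qed
  qed
  define H where "H = {k*m | k m. k \<in> K \<and> k \<noteq> 0 \<and> m \<in> M}"
  have H0: "0 \<notin> H" using M0 by (auto simp: H_def)
  have H1: "1 \<in> H" unfolding H_def using K1 M1 by force
  have MH: "M \<subseteq> H" unfolding H_def using K1 by force
  have Hm: "\<forall>x\<in>H. \<forall>y\<in>H. x*y \<in> H"
  proof (intro ballI)
    fix x y assume "x \<in> H" "y \<in> H"
    then obtain k m k' m' where x: "x = k*m" "k\<in>K" "k\<noteq>0" "m\<in>M" and y: "y = k'*m'" "k'\<in>K" "k'\<noteq>0" "m'\<in>M"
      unfolding H_def by blast
    have m0: "m \<noteq> 0" using x M0 by auto
    have "x*y = (k*(m*k'*inverse m))*(m*m')" using m0 x y by (simp add: mult.assoc) (simp add: mult.assoc[symmetric])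
    moreover have "k*(m*k'*inverse m) \<in> K" using Kmul Kconj x y by auto
    moreover have "k*(m*k'*inverse m) \<noteq> 0" using x y m0 by simp
    moreover have "m*m' \<in> M" using Mm x y by auto
    ultimately show "x*y \<in> H" unfolding H_def by blast
  qed
  have Hi: "\<forall>x\<in>H. inverse x \<in> H"
  proof
    fix x assume "x \<in> H"
    then obtain k m where x: "x = k*m" "k\<in>K" "k\<noteq>0" "m\<in>M" unfolding H_def by blast
    have m0: "m \<noteq> 0" using x M0 by auto
    have imM: "inverse m \<in> M" using Mi x by auto
    have "inverse x = (inverse m * inverse k * inverse (inverse m)) * inverse m"
      using m0 x by (simp add: nonzero_inverse_mult_distrib mult.assoc)
    moreover have "inverse m * inverse k * inverse (inverse m) \<in> K" using Kconj[OF imM Kinv[OF x(2)]] by simp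
    moreover have "inverse m * inverse k * inverse (inverse m) \<noteq> 0" using x m0 by simp
    ultimately show "inverse x \<in> H" using imM unfolding H_def by blast
  qed
  from maxH[OF H0 H1 Hm Hi MH] show ?thesis
  proof
    assume HM: "H = M"
    define K' where "K' = K - {0}"
    have K'M: "K' \<subseteq> M"
    proof
      fix z assume "z \<in> K'"
      then have "z*1 \<in> H" unfolding H_def K'_def using M1 by blast
      then show "z \<in> M" using HM by simp
    qed
    have "abn M K'" unfolding abn_def
    proof (intro conjI ballI)
      show "K' \<subseteq> M" by (rule K'M)
      show "1 \<in> K'" using K1 by (simp add: K'_def)
      fix x assume xK: "x \<in> K'"
      then have xK1: "x \<in> K" and x0: "x \<noteq> 0" by (auto simp: K'_def)
      show "inverse x \<in> K'" using Kinv[OF xK1] x0 by (simp add: K'_def)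
      {
        fix y assume yK: "y \<in> K'"
        then have yK1: "y \<in> K" and y0: "y \<noteq> 0" by (auto simp: K'_def)
        show "x*y \<in> K'" using Kmul[OF xK1 yK1] x0 y0 by (simp add: K'_def)
        show "x*y = y*x" by (rule Kab[OF xK1 yK1])
      }
    next
      fix m x assume mM: "m \<in> M" and xK: "x \<in> K'"
      then have xK1: "x \<in> K" and x0: "x \<noteq> 0" by (auto simp: K'_def)
      have "m \<noteq> 0" using mM M0 by auto
      then show "m*x*inverse m \<in> K'" using Kconj[OF mM xK1] x0 by (simp add: K'_def)
    qed
    moreover have "A \<subseteq> K'" using AK AM M0 by (auto simp: K'_def)
    ultimately have "K' = A" using Amax by blast
    then have "\<forall>x\<in>A. x+1 \<noteq> 0 \<longrightarrow> x+1 \<in> A" using Kadd K1 by (auto simp: K'_def)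
    then show ?thesis by blast
  next
    assume HD: "H = {x. x \<noteq> 0}"
    have nor: "\<forall>d. d\<noteq>0 \<longrightarrow> (\<forall>a\<in>A. d*a*inverse d \<in> A)"
    proof (intro allI impI ballI)
      fix d a :: 'a assume d0: "d \<noteq> 0" and aA: "a \<in> A"
      then have "d \<in> H" using HD by simp
      then obtain k m where d: "d = k*m" "k\<in>K" "k\<noteq>0" "m\<in>M" unfolding H_def by blast
      have m0: "m \<noteq> 0" using d M0 by auto
      define a' where "a' = m*a*inverse m"
      have a'A: "a' \<in> A" using Aconj d aA a'_def by auto
      have ka: "k*a' = a'*k" using d(2) a'A AC by (auto simp: K_def)
      have "d*a*inverse d = k*a'*inverse k" using m0 d
        by (simp add: a'_def nonzero_inverse_mult_distrib mult.assoc)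
      also have "\<dots> = a'" using ka d by (simp add: mult.assoc)
      finally show "d*a*inverse d \<in> A" using a'A by simp
    qed
    have "0 \<notin> A" using AM M0 by auto
    then have "\<forall>a\<in>A. \<forall>x. a*x = x*a" using herstein[OF _ Aab nor] by auto
    then show ?thesis by blast
  qed
qed


lemma abn_chain:
  fixes M :: "'a::division_ring set"
  assumes ne: "\<C> \<noteq> {}" and ch: "subset.chain {N. abn M N} \<C>"
  shows "abn M (\<Union>\<C>)"
proof -
  have CA: "\<And>X. X \<in> \<C> \<Longrightarrow> abn M X" using ch by (auto simp: subset_chain_def)
  have two: "\<And>x y. x \<in> \<Union>\<C> \<Longrightarrow> y \<in> \<Union>\<C> \<Longrightarrow> \<exists>Z\<in>\<C>. x \<in> Z \<and> y \<in> Z"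
  proof -
    fix x y assume "x \<in> \<Union>\<C>" "y \<in> \<Union>\<C>"
    then obtain X Y where "X\<in>\<C>" "Y\<in>\<C>" "x\<in>X" "y\<in>Y" by blast
    moreover have "X \<subseteq> Y \<or> Y \<subseteq> X" using ch \<open>X\<in>\<C>\<close> \<open>Y\<in>\<C>\<close> by (auto simp: subset_chain_def)
    ultimately show "\<exists>Z\<in>\<C>. x \<in> Z \<and> y \<in> Z" by blast
  qed
  obtain X0 where X0: "X0 \<in> \<C>" using ne by blast
  show ?thesis unfolding abn_def
  proof (intro conjI ballI)
    show "\<Union>\<C> \<subseteq> M"
    proof
      fix x assume "x \<in> \<Union>\<C>"
      then obtain X where "X \<in> \<C>" "x \<in> X" by blast
      then show "x \<in> M" using CA[of X] unfolding abn_def by blast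
    qed
    show "1 \<in> \<Union>\<C>" using CA[OF X0] X0 by (auto simp: abn_def)
    fix x assume x: "x \<in> \<Union>\<C>"
    show "inverse x \<in> \<Union>\<C>"
    proof -
      obtain X where "X \<in> \<C>" "x \<in> X" using x by blast
      then show ?thesis using CA[of X] unfolding abn_def by blast
    qed
    {
      fix y assume y: "y \<in> \<Union>\<C>"
      from two[OF x y] obtain Z where "Z\<in>\<C>" "x\<in>Z" "y\<in>Z" by blast
      then show "x*y \<in> \<Union>\<C>" and "x*y = y*x" using CA[of Z] by (auto simp: abn_def)
    }
  next
    fix m x assume "m \<in> M" "x \<in> \<Union>\<C>"
    then obtain X where "X \<in> \<C>" "x \<in> X" by blast
    then show "m*x*inverse m \<in> \<Union>\<C>" using CA[of X] \<open>m \<in> M\<close> unfolding abn_def by blast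
  qed
qed

theorem proposition2p4:
  fixes M :: "('a::division_ring) set"
  assumes noncomm: "\<exists>a b :: 'a. a * b \<noteq> b * a"
    and max: "maximal_subgroup mult_units M"
    and nonab: "\<not> abelian_set mult_units M"
    and locsolv: "locally_solvable mult_units M"
  shows "\<exists>!N. maximal_abelian_normal mult_units M N"
proof -
  let ?G = "mult_units :: 'a monoid"
  have Ms: "subgroup M ?G" using max by (simp add: maximal_subgroup_def)
  have Mp: "0 \<notin> M \<and> 1 \<in> M \<and> (\<forall>x\<in>M. \<forall>y\<in>M. x*y \<in> M) \<and> (\<forall>x\<in>M. inverse x \<in> M)"
    using subgroup_mu_iff[THEN iffD1, OF Ms] .
  then have M0: "0 \<notin> M" and M1: "1 \<in> M" and Mm: "\<forall>x\<in>M. \<forall>y\<in>M. x*y \<in> M"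
    and Mi: "\<forall>x\<in>M. inverse x \<in> M" by auto
  have carr: "carrier ?G = {x. x \<noteq> 0}" by (simp add: mult_units_def)
  have maxH: "H = M \<or> H = {x. x \<noteq> 0}"
    if "0 \<notin> H" "1 \<in> H" "\<forall>x\<in>H. \<forall>y\<in>H. x*y \<in> H" "\<forall>x\<in>H. inverse x \<in> H" "M \<subseteq> H"
    for H :: "'a set"
  proof -
    have "subgroup H ?G" using that subgroup_mu_iff by blast
    then show ?thesis using max that(5) carr unfolding maximal_subgroup_def by blast
  qed
  have ab: "abn M N \<longleftrightarrow> N \<lhd> ?G\<lparr>carrier := M\<rparr> \<and> abelian_set ?G N" for N
    unfolding abn_def normal_mu_iff[OF Ms] abelian_set_def by (auto simp: mult_units_def)
  have iff: "maximal_abelian_normal ?G M N \<longleftrightarrow> abn M N \<and> (\<forall>N'. abn M N' \<and> N \<subseteq> N' \<longrightarrow> N' = N)" for N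
    unfolding maximal_abelian_normal_def ab by blast
  have ex: "\<exists>N\<in>{N. abn M N}. \<forall>X\<in>{N. abn M N}. N \<subseteq> X \<longrightarrow> X = N"
  proof (rule subset_Zorn_nonempty)
    have "abn M {1}" unfolding abn_def using M1 M0 by (auto intro!: right_inverse)
    then show "{N. abn M N} \<noteq> {}" by blast
  next
    fix C assume "C \<noteq> {}" "subset.chain {N. abn M N} C"
    then show "\<Union>C \<in> {N. abn M N}" using abn_chain by blast
  qed
  have uniq: "A = B" if A: "abn M A" "\<forall>N'. abn M N' \<and> A \<subseteq> N' \<longrightarrow> N' = A"
    and B: "abn M B" "\<forall>N'. abn M N' \<and> B \<subseteq> N' \<longrightarrow> N' = B" for A B
  proof -
    have comm: "\<forall>x\<in>A. \<forall>y\<in>B. x*y = y*x"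
      using dichotomy[OF M0 M1 Mm Mi maxH A(1) A(2)] comm_AB[OF M0 A(1) B(1)] by blast
    define AB where "AB = {a*b | a b. a \<in> A \<and> b \<in> B}"
    have AM: "A \<subseteq> M" "1 \<in> A" "\<forall>x\<in>A. \<forall>y\<in>A. x*y \<in> A" "\<forall>x\<in>A. inverse x \<in> A"
      "\<forall>m\<in>M. \<forall>x\<in>A. m*x*inverse m \<in> A" "\<forall>x\<in>A. \<forall>y\<in>A. x*y = y*x"
      using A(1) by (auto simp: abn_def)
    have BM: "B \<subseteq> M" "1 \<in> B" "\<forall>x\<in>B. \<forall>y\<in>B. x*y \<in> B" "\<forall>x\<in>B. inverse x \<in> B"
      "\<forall>m\<in>M. \<forall>x\<in>B. m*x*inverse m \<in> B" "\<forall>x\<in>B. \<forall>y\<in>B. x*y = y*x"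
      using B(1) by (auto simp: abn_def)
    have abnAB: "abn M AB" unfolding abn_def
    proof (intro conjI ballI)
      show "AB \<subseteq> M"
      proof
        fix z assume "z \<in> AB"
        then obtain a b where "z = a*b" "a\<in>A" "b\<in>B" unfolding AB_def by blast
        then show "z \<in> M" using AM(1) BM(1) Mm by blast
      qed
      show "1 \<in> AB" unfolding AB_def using AM(2) BM(2) by force
      fix x assume "x \<in> AB"
      then obtain a b where x: "x = a*b" "a\<in>A" "b\<in>B" unfolding AB_def by blast
      have a0: "a \<noteq> 0" and b0: "b \<noteq> 0" using x AM(1) BM(1) M0 by auto
      have ci: "inverse a * inverse b = inverse b * inverse a" using comm AM(4) BM(4) x by blast
      have "inverse x = inverse a * inverse b"
        using x a0 b0 ci by (simp add: nonzero_inverse_mult_distrib)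
      then show "inverse x \<in> AB" unfolding AB_def using x AM(4) BM(4) by blast
      {
        fix y assume "y \<in> AB"
        then obtain a' b' where y: "y = a'*b'" "a'\<in>A" "b'\<in>B" unfolding AB_def by blast
        have c1: "b*a' = a'*b" using comm x(3) y(2) by metis
        have "x*y = (a*a')*(b*b')" using c1 x y by (metis mult.assoc)
        then show "x*y \<in> AB" unfolding AB_def using x y AM(3) BM(3) by blast
        have c2: "a*b' = b'*a" using comm x(2) y(3) by blast
        have "x*y = (a*a')*(b*b')" using c1 x y by (metis mult.assoc)
        also have "\<dots> = (a'*a)*(b'*b)" using AM(6) BM(6) x y by simp
        also have "\<dots> = y*x" using c2 x y by (metis mult.assoc)
        finally show "x*y = y*x" .
      }
    next
      fix m x assume mM: "m \<in> M" and "x \<in> AB"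
      then obtain a b where x: "x = a*b" "a\<in>A" "b\<in>B" unfolding AB_def by blast
      have m0: "m \<noteq> 0" using mM M0 by auto
      have "m*x*inverse m = (m*a*inverse m)*(m*b*inverse m)"
        using m0 x by (simp add: mult.assoc) (simp add: mult.assoc[symmetric])
      then show "m*x*inverse m \<in> AB" unfolding AB_def using AM(5) BM(5) mM x by blast
    qed
    have "A \<subseteq> AB" unfolding AB_def using BM(2) by force
    then have "AB = A" using A(2) abnAB by blast
    moreover have "B \<subseteq> AB" unfolding AB_def using AM(2) by force
    then have "AB = B" using B(2) abnAB by blast
    ultimately show "A = B" by simp
  qed
  show ?thesis
  proof (rule ex_ex1I)
    obtain N where "abn M N" "\<forall>X. abn M X \<and> N \<subseteq> X \<longrightarrow> X = N" using ex by blast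
    then show "\<exists>N. maximal_abelian_normal ?G M N" using iff by blast
  next
    fix N1 N2 assume "maximal_abelian_normal ?G M N1" "maximal_abelian_normal ?G M N2"
    then have h1: "abn M N1" "\<forall>N'. abn M N' \<and> N1 \<subseteq> N' \<longrightarrow> N' = N1"
      and h2: "abn M N2" "\<forall>N'. abn M N' \<and> N2 \<subseteq> N' \<longrightarrow> N' = N2"
      using iff[of N1] iff[of N2] by simp_all
    show "N1 = N2" by (rule uniq[OF h1 h2])
  qed
qed

end
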